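(* Let $Q=\{0,\dots,n-1\}$ and consider the transition semigroups of minimal complete DFAs with state set $Q$, initial state $0$ and empty state $n-1$ accepting suffix-free languages. For $n=6$, the transition semigroup of maximum cardinality among these is unique and equals $\mathbf{W}_{\mathrm{sf}}(6)$. For $2\le n\le 5$, the transition semigroup of maximum cardinality among these is unique and equals $\mathbf{V}_{\mathrm{sf}}(n)$.
   Context: A language $L$ is suffix-free if whenever $w\in L$ and $u\in L$ with $u$ a suffix of $w$, then $u=w$. Transformations act on the right ($qt$ is the image of $q$ under $t$). The transition semigroup of a DFA is the semigroup of transformations of its state set generated by the transformations induced by its letters. A minimal complete DFA of a suffix-free language with $n\ge2$ states has exactly one empty state (a state from which no final state is reachable), labeled $n-1$. Define $\mathbf{B}_{\mathrm{sf}}(n)=\{t:Q\to Q \mid 0\notin Qt,\ (n-1)t=n-1,\ \text{and for all } j\ge1:\ 0t^j=n-1 \text{ or } 0t^j\neq qt^j \text{ for all } 0<q<n-1\}$, $\mathbf{V}_{\mathrm{sf}}(n)=\{t\in\mathbf{B}_{\mathrm{sf}}(n)\mid \text{for all } p\neq q \text{ in } Q:\ pt=qt=n-1 \text{ or } pt\neq qt\}$, and $\mathbf{W}_{\mathrm{sf}}(n)=\{t\in\mathbf{B}_{\mathrm{sf}}(n)\mid 0t=n-1 \text{ or } qt=n-1 \text{ for all } 1\le q\le n-2\}$. *)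

theory Defs
  imports Main "HOL-Library.Sublist"
begin

text \<open>A transformation of Q = {0..<n} is represented canonically
  as a function nat => nat that maps Q into Q and fixes every q >= n.
  Transformations act on the right: applying t then s is s o t.\<close>

definition transf :: "nat \<Rightarrow> (nat \<Rightarrow> nat) set" where
  "transf n = {t. (\<forall>q<n. t q < n) \<and> (\<forall>q. n \<le> q \<longrightarrow> t q = q)}"

definition run :: "(nat \<Rightarrow> nat \<Rightarrow> nat) \<Rightarrow> nat \<Rightarrow> nat list \<Rightarrow> nat" where
  "run delta q w = foldl (\<lambda>p a. delta a p) q w"

definition is_dfa :: "nat \<Rightarrow> nat set \<Rightarrow> (nat \<Rightarrow> nat \<Rightarrow> nat) \<Rightarrow> nat set \<Rightarrow> bool" where
  "is_dfa n Sig delta F \<longleftrightarrow> 0 < n \<and> finite Sig \<and> F \<subseteq> {0..<n} \<and>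
     (\<forall>a\<in>Sig. \<forall>q<n. delta a q < n)"

definition lang :: "nat set \<Rightarrow> (nat \<Rightarrow> nat \<Rightarrow> nat) \<Rightarrow> nat set \<Rightarrow> nat list set" where
  "lang Sig delta F = {w. set w \<subseteq> Sig \<and> run delta 0 w \<in> F}"

definition is_minimal_dfa :: "nat \<Rightarrow> nat set \<Rightarrow> (nat \<Rightarrow> nat \<Rightarrow> nat) \<Rightarrow> nat set \<Rightarrow> bool" where
  "is_minimal_dfa n Sig delta F \<longleftrightarrow> is_dfa n Sig delta F \<and>
     (\<forall>q<n. \<exists>w. set w \<subseteq> Sig \<and> run delta 0 w = q) \<and>
     (\<forall>p<n. \<forall>q<n. p \<noteq> q \<longrightarrow>
        (\<exists>w. set w \<subseteq> Sig \<and> (run delta p w \<in> F \<longleftrightarrow> run delta q w \<notin> F)))"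

definition is_empty_state :: "nat set \<Rightarrow> (nat \<Rightarrow> nat \<Rightarrow> nat) \<Rightarrow> nat set \<Rightarrow> nat \<Rightarrow> bool" where
  "is_empty_state Sig delta F q \<longleftrightarrow> (\<forall>w. set w \<subseteq> Sig \<longrightarrow> run delta q w \<notin> F)"

definition suffix_free :: "'a list set \<Rightarrow> bool" where
  "suffix_free L \<longleftrightarrow> (\<forall>w\<in>L. \<forall>u\<in>L. suffix u w \<longrightarrow> u = w)"

definition word_transf :: "nat \<Rightarrow> (nat \<Rightarrow> nat \<Rightarrow> nat) \<Rightarrow> nat list \<Rightarrow> nat \<Rightarrow> nat" where
  "word_transf n delta w = (\<lambda>q. if q < n then run delta q w else q)"

definition trans_semigroup :: "nat \<Rightarrow> nat set \<Rightarrow> (nat \<Rightarrow> nat \<Rightarrow> nat) \<Rightarrow> (nat \<Rightarrow> nat) set" where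
  "trans_semigroup n Sig delta =
     {word_transf n delta w | w. w \<noteq> [] \<and> set w \<subseteq> Sig}"

definition sf_semigroups :: "nat \<Rightarrow> (nat \<Rightarrow> nat) set set" where
  "sf_semigroups n = {trans_semigroup n Sig delta | Sig delta F.
      is_minimal_dfa n Sig delta F \<and> is_empty_state Sig delta F (n - 1) \<and>
      suffix_free (lang Sig delta F)}"

definition B_sf :: "nat \<Rightarrow> (nat \<Rightarrow> nat) set" where
  "B_sf n = {t \<in> transf n. (\<forall>q<n. t q \<noteq> 0) \<and> t (n - 1) = n - 1 \<and>
      (\<forall>j\<ge>1. (t ^^ j) 0 = n - 1 \<or> (\<forall>q. 0 < q \<and> q < n - 1 \<longrightarrow> (t ^^ j) 0 \<noteq> (t ^^ j) q))}"

definition V_sf :: "nat \<Rightarrow> (nat \<Rightarrow> nat) set" where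
  "V_sf n = {t \<in> B_sf n. \<forall>p<n. \<forall>q<n. p \<noteq> q \<longrightarrow>
      (t p = n - 1 \<and> t q = n - 1) \<or> t p \<noteq> t q}"

definition W_sf :: "nat \<Rightarrow> (nat \<Rightarrow> nat) set" where
  "W_sf n = {t \<in> B_sf n. t 0 = n - 1 \<or> (\<forall>q. 1 \<le> q \<and> q \<le> n - 2 \<longrightarrow> t q = n - 1)}"

definition unique_max_card :: "'a set set \<Rightarrow> 'a set \<Rightarrow> bool" where
  "unique_max_card Fam S \<longleftrightarrow> S \<in> Fam \<and> (\<forall>T\<in>Fam. T \<noteq> S \<longrightarrow> card T < card S)"

end

theory Submission
  imports Defs
begin

definition RR :: "nat \<Rightarrow> (nat \<Rightarrow> nat) \<Rightarrow> bool" where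
  "RR n t \<longleftrightarrow> t \<in> transf n \<and> (\<forall>q<n. t q \<noteq> 0) \<and> t (n-1) = n-1 \<and>
     (t 0 \<noteq> n-1 \<longrightarrow> (\<forall>q. 0<q \<and> q<n-1 \<longrightarrow> t 0 \<noteq> t q))"

definition compatC :: "nat \<Rightarrow> (nat \<times> nat) set \<Rightarrow> (nat \<Rightarrow> nat) \<Rightarrow> bool" where
  "compatC n C t \<longleftrightarrow> (\<forall>a b. (a,b) \<in> C \<longrightarrow> t a = t b \<longrightarrow> t a = n-1) \<and>
     (t 0 \<noteq> n-1 \<longrightarrow> (\<forall>q. 0<q \<and> q<n-1 \<longrightarrow> t q \<noteq> n-1 \<longrightarrow> (t 0, t q) \<in> C))"

definition SS :: "nat \<Rightarrow> (nat \<times> nat) set \<Rightarrow> (nat \<Rightarrow> nat) set" where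
  "SS n C = {t. RR n t \<and> compatC n C t}"

definition symr :: "(nat \<times> nat) list \<Rightarrow> (nat \<times> nat) set" where
  "symr xs = set xs \<union> (set xs)\<inverse>"

definition tf :: "nat \<Rightarrow> nat list \<Rightarrow> nat \<Rightarrow> nat" where
  "tf n l = (\<lambda>q. if q < n then l!q else q)"

definition Pl :: "nat \<Rightarrow> (nat*nat) list \<Rightarrow> nat list \<Rightarrow> bool" where
 "Pl n xs l = ((l!0 \<noteq> n-1 \<longrightarrow> list_all (\<lambda>q. l!0 \<noteq> l!q \<and> (l!q \<noteq> n-1 \<longrightarrow> (l!0,l!q) \<in> set xs \<or> (l!q,l!0) \<in> set xs)) [1..<n-1])
   \<and> list_all (\<lambda>(a,b). l!a = l!b \<longrightarrow> l!a = n-1) xs)"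

fun cntf :: "(nat list \<Rightarrow> bool) \<Rightarrow> nat list \<Rightarrow> nat \<Rightarrow> nat list \<Rightarrow> nat" where
 "cntf P vs 0 pre = (if P pre then 1 else 0)"
| "cntf P vs (Suc k) pre = sum_list (map (\<lambda>v. cntf P vs k (v#pre)) vs)"

definition pairs :: "nat \<Rightarrow> (nat*nat) list" where
 "pairs n = concat (map (\<lambda>a. map (\<lambda>b. (a,b)) [Suc a..<n-1]) [1..<n-1])"

definition cnt :: "nat \<Rightarrow> (nat*nat) list \<Rightarrow> nat" where
  "cnt n xs = cntf (Pl n xs) [1..<n] (n-1) [n-1]"

lemma set_pairs: "set (pairs n) = {(a,b). 0 < a \<and> a < b \<and> b < n-1}"
  by (auto simp: pairs_def image_iff)

lemma Pl_iff:
  assumes "length l = n" "set l \<subseteq> {1..<n}" "l!(n-1) = n-1" "2 \<le> n"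
    "\<forall>(a,b)\<in>set xs. a < n \<and> b < n"
  shows "(RR n (tf n l) \<and> compatC n (symr xs) (tf n l)) \<longleftrightarrow> Pl n xs l"
proof -
  have lt: "\<And>q. q < n \<Longrightarrow> l!q < n \<and> l!q \<noteq> 0"
    using assms(1,2) nth_mem by fastforce
  have tr: "tf n l \<in> transf n" using lt by (auto simp: transf_def tf_def)
  have "RR n (tf n l) \<longleftrightarrow> (l!0 \<noteq> n-1 \<longrightarrow> (\<forall>q. 0<q \<and> q<n-1 \<longrightarrow> l!0 \<noteq> l!q))"
    using tr lt assms(3,4) by (auto simp: RR_def tf_def)
  moreover have "compatC n (symr xs) (tf n l) \<longleftrightarrow>
     (\<forall>(a,b)\<in>set xs. l!a = l!b \<longrightarrow> l!a = n-1) \<and>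
     (l!0 \<noteq> n-1 \<longrightarrow> (\<forall>q. 0<q \<and> q<n-1 \<longrightarrow> l!q \<noteq> n-1 \<longrightarrow> (l!0,l!q) \<in> set xs \<or> (l!q,l!0) \<in> set xs))"
  proof -
    have A: "(\<forall>a b. (a,b) \<in> symr xs \<longrightarrow> tf n l a = tf n l b \<longrightarrow> tf n l a = n-1) \<longleftrightarrow>
      (\<forall>(a,b)\<in>set xs. l!a = l!b \<longrightarrow> l!a = n-1)"
    proof
      assume h: "\<forall>a b. (a,b) \<in> symr xs \<longrightarrow> tf n l a = tf n l b \<longrightarrow> tf n l a = n-1"
      show "\<forall>(a,b)\<in>set xs. l!a = l!b \<longrightarrow> l!a = n-1"
      proof (intro ballI, clarify)
        fix a b assume ab: "(a,b) \<in> set xs" "l!a = l!b"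
        then have "a < n" "b < n" using assms(5) by auto
        then show "l!a = n-1" using h ab unfolding symr_def tf_def by auto
      qed
    next
      assume h: "\<forall>(a,b)\<in>set xs. l!a = l!b \<longrightarrow> l!a = n-1"
      show "\<forall>a b. (a,b) \<in> symr xs \<longrightarrow> tf n l a = tf n l b \<longrightarrow> tf n l a = n-1"
      proof (intro allI impI)
        fix a b assume ab: "(a,b) \<in> symr xs" "tf n l a = tf n l b"
        then have "(a,b) \<in> set xs \<or> (b,a) \<in> set xs" unfolding symr_def by auto
        moreover then have "a < n" "b < n" using assms(5) by auto
        ultimately show "tf n l a = n-1" using h ab(2) unfolding tf_def by auto
      qed
    qed
    have B: "(tf n l 0 \<noteq> n-1 \<longrightarrow> (\<forall>q. 0<q \<and> q<n-1 \<longrightarrow> tf n l q \<noteq> n-1 \<longrightarrow> (tf n l 0, tf n l q) \<in> symr xs))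
       \<longleftrightarrow> (l!0 \<noteq> n-1 \<longrightarrow> (\<forall>q. 0<q \<and> q<n-1 \<longrightarrow> l!q \<noteq> n-1 \<longrightarrow> (l!0,l!q) \<in> set xs \<or> (l!q,l!0) \<in> set xs))"
    proof -
      have "tf n l 0 = l!0" using assms(4) by (simp add: tf_def)
      moreover have "\<And>q. q < n-1 \<Longrightarrow> tf n l q = l!q" by (simp add: tf_def less_diff_conv)
      moreover have "\<And>x y. (x,y) \<in> symr xs \<longleftrightarrow> (x,y) \<in> set xs \<or> (y,x) \<in> set xs"
        unfolding symr_def by auto
      ultimately show ?thesis by (metis (no_types, lifting))
    qed
    show ?thesis unfolding compatC_def A B by (rule refl)
  qed
  moreover have "list_all (\<lambda>q. l!0 \<noteq> l!q \<and> (l!q \<noteq> n-1 \<longrightarrow> (l!0,l!q) \<in> set xs \<or> (l!q,l!0) \<in> set xs)) [1..<n-1]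
     \<longleftrightarrow> (\<forall>q. 0<q \<and> q<n-1 \<longrightarrow> l!0 \<noteq> l!q \<and> (l!q \<noteq> n-1 \<longrightarrow> (l!0,l!q) \<in> set xs \<or> (l!q,l!0) \<in> set xs))"
    unfolding list_all_iff by (simp add: Ball_def Suc_le_eq)
  moreover have "list_all (\<lambda>(a,b). l!a = l!b \<longrightarrow> l!a = n-1) xs \<longleftrightarrow> (\<forall>(a,b)\<in>set xs. l!a = l!b \<longrightarrow> l!a = n-1)"
    unfolding list_all_iff by simp
  ultimately show ?thesis unfolding Pl_def by blast
qed

lemma cntf_card:
  assumes "distinct vs"
  shows "cntf P vs k pre = card {l. length l = k \<and> set l \<subseteq> set vs \<and> P (l @ pre)}"
  using assms
proof (induction k arbitrary: pre)
  case 0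
  have "{l. length l = 0 \<and> set l \<subseteq> set vs \<and> P (l @ pre)} = (if P pre then {[]} else {})"
    by auto
  then show ?case by simp
next
  case (Suc k)
  let ?A = "\<lambda>v. {l. length l = k \<and> set l \<subseteq> set vs \<and> P (l @ v # pre)}"
  have eq: "{l. length l = Suc k \<and> set l \<subseteq> set vs \<and> P (l @ pre)} =
     (\<Union>v\<in>set vs. (\<lambda>l. l @ [v]) ` ?A v)"
  proof (rule set_eqI, rule iffI)
    fix l assume "l \<in> {l. length l = Suc k \<and> set l \<subseteq> set vs \<and> P (l @ pre)}"
    then obtain y ys where "l = ys @ [y]" "length ys = k" "set l \<subseteq> set vs" "P (l @ pre)"
      by (auto simp: length_Suc_conv_rev)
    then show "l \<in> (\<Union>v\<in>set vs. (\<lambda>l. l @ [v]) ` ?A v)" by auto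
  qed auto
  have fin: "\<And>v. finite (?A v)"
    by (rule finite_subset[OF _ finite_lists_length_eq[OF finite_set, of vs k]]) auto
  have "card (\<Union>v\<in>set vs. (\<lambda>l. l @ [v]) ` ?A v) = (\<Sum>v\<in>set vs. card ((\<lambda>l. l @ [v]) ` ?A v))"
    by (rule card_UN_disjoint) (use fin in auto)
  also have "\<dots> = (\<Sum>v\<in>set vs. card (?A v))"
    by (rule sum.cong) (auto intro!: card_image inj_onI)
  also have "\<dots> = sum_list (map (\<lambda>v. card (?A v)) vs)"
    using Suc.prems by (simp add: sum.distinct_set_conv_list)
  finally show ?case using Suc eq by simp
qed

lemma tf_append_inj:
  "inj_on (\<lambda>l. tf n (l @ [n-1])) {l. length l = n-1}"
proof (rule inj_onI)
  fix l1 l2 assume l: "l1 \<in> {l. length l = n-1}" "l2 \<in> {l. length l = n-1}"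
    and eq: "tf n (l1 @ [n-1]) = tf n (l2 @ [n-1])"
  show "l1 = l2"
  proof (rule nth_equalityI)
    show "length l1 = length l2" using l by simp
    fix i assume "i < length l1"
    with l have i: "i < n - 1" by simp
    have "tf n (l1 @ [n-1]) i = tf n (l2 @ [n-1]) i" using eq by simp
    with i l show "l1 ! i = l2 ! i" by (simp add: tf_def nth_append split: if_splits)
  qed
qed

lemma card_SS:
  assumes "2 \<le> n" "\<forall>(a,b)\<in>set xs. a < n \<and> b < n"
  shows "card (SS n (symr xs)) = cnt n xs" and "finite (SS n (symr xs))"
proof -
  let ?A = "{l. length l = n-1 \<and> set l \<subseteq> set [1..<n] \<and> Pl n xs (l @ [n-1])}"
  have eq: "SS n (symr xs) = (\<lambda>l. tf n (l @ [n-1])) ` ?A"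
  proof (rule set_eqI, rule iffI)
    fix t assume t: "t \<in> SS n (symr xs)"
    hence R: "RR n t" and Cc: "compatC n (symr xs) t" by (auto simp: SS_def)
    let ?l = "map t [0..<n-1]"
    have tr: "\<forall>q<n. t q < n" "\<forall>q. n \<le> q \<longrightarrow> t q = q" "\<forall>q<n. t q \<noteq> 0" "t (n-1) = n-1"
      using R by (auto simp: RR_def transf_def)
    have tfe: "tf n (?l @ [n-1]) = t"
    proof
      fix q show "tf n (?l @ [n-1]) q = t q"
        using tr assms(1) by (cases "q < n-1"; cases "q = n-1") (auto simp: tf_def nth_append)
    qed
    have len: "length (?l @ [n-1]) = n" using assms(1) by simp
    have st: "set (?l @ [n-1]) \<subseteq> {1..<n}" using tr assms(1) by (auto simp: Suc_le_eq)
    have ln: "(?l @ [n-1]) ! (n-1) = n-1" by (simp add: nth_append)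
    have "Pl n xs (?l @ [n-1])"
      using Pl_iff[OF len st ln assms] R Cc tfe by simp
    moreover have "set ?l \<subseteq> set [1..<n]" using st by auto
    ultimately show "t \<in> (\<lambda>l. tf n (l @ [n-1])) ` ?A"
      using tfe by (intro image_eqI[of _ _ ?l]) auto
  next
    fix t assume "t \<in> (\<lambda>l. tf n (l @ [n-1])) ` ?A"
    then obtain l where l: "length l = n-1" "set l \<subseteq> set [1..<n]" "Pl n xs (l @ [n-1])"
      and t: "t = tf n (l @ [n-1])" by auto
    have len: "length (l @ [n-1]) = n" using assms(1) l by simp
    have st: "set (l @ [n-1]) \<subseteq> {1..<n}" using l assms(1) by auto
    have ln: "(l @ [n-1]) ! (n-1) = n-1" using l by (simp add: nth_append)
    show "t \<in> SS n (symr xs)"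
      using Pl_iff[OF len st ln assms] l t by (simp add: SS_def)
  qed
  have fA: "finite ?A"
    by (rule finite_subset[OF _ finite_lists_length_eq[OF finite_set, of "[1..<n]" "n-1"]]) auto
  have "card (SS n (symr xs)) = card ?A"
    unfolding eq by (rule card_image, rule inj_on_subset[OF tf_append_inj]) auto
  also have "\<dots> = cnt n xs" unfolding cnt_def by (subst cntf_card) auto
  finally show "card (SS n (symr xs)) = cnt n xs" .
  show "finite (SS n (symr xs))" unfolding eq using fA by simp
qed

lemma filter_subseqs: "filter P xs \<in> set (subseqs xs)"
  by (induction xs) (auto simp: Let_def)

lemma subseq_set_sub: "subseq ys xs \<Longrightarrow> set ys \<subseteq> set xs"
  by (induction rule: list_emb.induct) auto

lemma subseqs_subset: "ys \<in> set (subseqs xs) \<Longrightarrow> set ys \<subseteq> set xs"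
  using subseq_set_sub by (simp add: in_set_subseqs)

lemma main_bound:
  assumes n: "2 \<le> n"
    and RT: "\<forall>t\<in>T. RR n t"
    and I2: "\<forall>t\<in>T. \<forall>s\<in>T. \<forall>q. 0 < q \<and> q < n \<longrightarrow> s (t 0) = s (t q) \<longrightarrow> s (t 0) = n-1"
    and x0: "set xs0 \<subseteq> set (pairs n)"
    and comp: "list_all (\<lambda>xs. xs = xs0 \<or> cnt n xs < cnt n xs0) (subseqs (pairs n))"
  shows "T = SS n (symr xs0) \<or> card T < card (SS n (symr xs0))"
proof -
  define C where "C = {(t 0, t q) | t q. t \<in> T \<and> 0 < q \<and> q < n-1 \<and> t 0 \<noteq> n-1 \<and> t q \<noteq> n-1}"
  define xs where "xs = filter (\<lambda>(a,b). (a,b) \<in> C \<or> (b,a) \<in> C) (pairs n)"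
  have Cprop: "0 < a \<and> a < n-1 \<and> 0 < b \<and> b < n-1 \<and> a \<noteq> b" if ab: "(a,b) \<in> C" for a b
  proof -
    obtain t q where tq: "t \<in> T" "0 < q" "q < n-1" "t 0 \<noteq> n-1" "t q \<noteq> n-1" "a = t 0" "b = t q"
      using ab unfolding C_def by fastforce
    have R: "RR n t" using RT tq by auto
    have "t 0 < n" "t q < n" "t 0 \<noteq> 0" "t q \<noteq> 0" "t 0 \<noteq> t q"
      using R tq n unfolding RR_def transf_def by auto
    then show ?thesis using tq by auto
  qed
  have sx: "symr xs = C \<union> C\<inverse>"
  proof
    show "symr xs \<subseteq> C \<union> C\<inverse>" unfolding symr_def xs_def by auto
    show "C \<union> C\<inverse> \<subseteq> symr xs"
    proof
      fix x assume x: "x \<in> C \<union> C\<inverse>"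
      obtain a b where ab: "x = (a,b)" by force
      have "(a,b) \<in> C \<or> (b,a) \<in> C" using x ab by auto
      then have pr: "0 < a \<and> a < n-1 \<and> 0 < b \<and> b < n-1 \<and> a \<noteq> b" using Cprop by blast
      show "x \<in> symr xs"
      proof (cases "a < b")
        case True
        then have "(a,b) \<in> set (pairs n)" using pr by (simp add: set_pairs)
        then show ?thesis using ab x unfolding symr_def xs_def by auto
      next
        case False
        then have "(b,a) \<in> set (pairs n)" using pr by (simp add: set_pairs)
        then show ?thesis using ab x unfolding symr_def xs_def by auto
      qed
    qed
  qed
  have TS: "T \<subseteq> SS n (symr xs)"
  proof
    fix s assume s: "s \<in> T"
    have "compatC n (C \<union> C\<inverse>) s"
      unfolding compatC_def
    proof (intro conjI allI impI)
      fix a b assume ab: "(a,b) \<in> C \<union> C\<inverse>" and eq: "s a = s b"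
      show "s a = n-1"
      proof (cases "(a,b) \<in> C")
        case True
        then obtain t q where tq: "t \<in> T" "0 < q" "q < n-1" "a = t 0" "b = t q" unfolding C_def by fastforce
        have "0 < q \<and> q < n" using tq by simp
        then have "s (t 0) = s (t q) \<longrightarrow> s (t 0) = n-1" using I2 tq(1) s by blast
        then show ?thesis using tq eq by simp
      next
        case False
        then have "(b,a) \<in> C" using ab by auto
        then obtain t q where tq: "t \<in> T" "0 < q" "q < n-1" "b = t 0" "a = t q" unfolding C_def by fastforce
        have "0 < q \<and> q < n" using tq by simp
        then have "s (t 0) = s (t q) \<longrightarrow> s (t 0) = n-1" using I2 tq(1) s by blast
        then show ?thesis using tq eq by simp
      qed
    next
      fix q assume "s 0 \<noteq> n-1" "0 < q \<and> q < n-1" "s q \<noteq> n-1"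
      then show "(s 0, s q) \<in> C \<union> C\<inverse>" using s unfolding C_def by blast
    qed
    then show "s \<in> SS n (symr xs)" using RT s sx by (simp add: SS_def)
  qed
  have xsub: "xs \<in> set (subseqs (pairs n))" unfolding xs_def by (rule filter_subseqs)
  have bnd: "\<forall>(a,b)\<in>set ys. a < n \<and> b < n" if "set ys \<subseteq> set (pairs n)" for ys
    using that by (auto simp: set_pairs)
  have bxs: "\<forall>(a,b)\<in>set xs. a < n \<and> b < n" using bnd subseqs_subset[OF xsub] by blast
  have bx0: "\<forall>(a,b)\<in>set xs0. a < n \<and> b < n" using bnd x0 by blast
  note c1 = card_SS[OF n bxs] and c0 = card_SS[OF n bx0]
  show ?thesis
  proof (cases "xs = xs0")
    case True
    then have sub: "T \<subseteq> SS n (symr xs0)" using TS by simp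
    show ?thesis
    proof (cases "T = SS n (symr xs0)")
      case False
      then have "T \<subset> SS n (symr xs0)" using sub by blast
      then show ?thesis using psubset_card_mono[OF c0(2)] by blast
    qed simp
  next
    case False
    then have "cnt n xs < cnt n xs0" using comp xsub by (auto simp: list_all_iff)
    moreover have "card T \<le> card (SS n (symr xs))" using TS c1(2) card_mono by blast
    ultimately show ?thesis using c1(1) c0(1) by simp
  qed
qed



lemma funpow_fix: "t e = e \<Longrightarrow> (t ^^ j) e = e"
  by (induction j) auto

lemma W_eq:
  assumes n: "2 \<le> n"
  shows "W_sf n = SS n {}"
proof
  show "W_sf n \<subseteq> SS n {}"
  proof
    fix t assume t: "t \<in> W_sf n"
    then have B: "t \<in> B_sf n" and W: "t 0 = n-1 \<or> (\<forall>q. 1 \<le> q \<and> q \<le> n - 2 \<longrightarrow> t q = n-1)"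
      by (auto simp: W_sf_def)
    have j1: "t 0 = n-1 \<or> (\<forall>q. 0 < q \<and> q < n-1 \<longrightarrow> t 0 \<noteq> t q)"
    proof -
      have "\<forall>j\<ge>1. (t ^^ j) 0 = n - 1 \<or> (\<forall>q. 0 < q \<and> q < n - 1 \<longrightarrow> (t ^^ j) 0 \<noteq> (t ^^ j) q)"
        using B unfolding B_sf_def by blast
      from this[rule_format, of 1] show ?thesis by simp
    qed
    have "RR n t" using B j1 unfolding B_sf_def RR_def by blast
    moreover have "compatC n {} t" using W n unfolding compatC_def by auto
    ultimately show "t \<in> SS n {}" by (simp add: SS_def)
  qed
next
  show "SS n {} \<subseteq> W_sf n"
  proof
    fix t assume "t \<in> SS n {}"
    then have R: "RR n t" and Cc: "compatC n {} t" by (auto simp: SS_def)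
    have tr: "t \<in> transf n" "\<forall>q<n. t q \<noteq> 0" "t (n-1) = n-1" using R by (auto simp: RR_def)
    have mid: "t 0 \<noteq> n-1 \<Longrightarrow> 0 < q \<Longrightarrow> q < n-1 \<Longrightarrow> t q = n-1" for q
      using Cc by (auto simp: compatC_def)
    have jc: "(t ^^ j) 0 = n - 1 \<or> (\<forall>q. 0 < q \<and> q < n - 1 \<longrightarrow> (t ^^ j) 0 \<noteq> (t ^^ j) q)"
      if j: "j \<ge> 1" for j
    proof (cases "t 0 = n-1")
      case True
      obtain k where k: "j = Suc k" using j by (cases j) auto
      have "(t ^^ j) 0 = (t ^^ k) (t 0)" unfolding k by (simp add: funpow_Suc_right del: funpow.simps)
      then show ?thesis using True funpow_fix[of t "n-1" k] tr by simp
    next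
      case False
      have "t 0 < n" using tr n by (auto simp: transf_def)
      then have t0: "0 < t 0" "t 0 < n-1" using False tr n by auto
      have tt0: "t (t 0) = n-1" using mid[OF False t0] .
      show ?thesis
      proof (cases "j = 1")
        case True
        then show ?thesis using mid[OF False] False by auto
      next
        case False
        then obtain k where k: "j = Suc (Suc k)" using j by (cases j; cases "j - 1") auto
        have "(t ^^ j) 0 = (t ^^ k) (t (t 0))" unfolding k by (simp add: funpow_Suc_right del: funpow.simps)
        then show ?thesis using tt0 funpow_fix[of t "n-1" k] tr by simp
      qed
    qed
    have "t \<in> B_sf n" using tr jc unfolding B_sf_def by auto
    moreover have "t 0 = n-1 \<or> (\<forall>q. 1 \<le> q \<and> q \<le> n - 2 \<longrightarrow> t q = n-1)"
    proof (cases "t 0 = n-1")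
      case False
      have "t q = n-1" if "1 \<le> q \<and> q \<le> n - 2" for q
        using mid[OF False, of q] that n by linarith
      then show ?thesis by blast
    qed simp
    ultimately show "t \<in> W_sf n" by (simp add: W_sf_def)
  qed
qed

definition IE :: "nat \<Rightarrow> (nat \<Rightarrow> nat) set" where
  "IE n = {t. t \<in> transf n \<and> (\<forall>q<n. t q \<noteq> 0) \<and> t (n-1) = n-1 \<and>
     (\<forall>p<n. \<forall>q<n. t p = t q \<longrightarrow> p = q \<or> t p = n-1)}"

lemma symr_pairs: "2 \<le> n \<Longrightarrow> symr (pairs n) = {(a,b). 0 < a \<and> a < n-1 \<and> 0 < b \<and> b < n-1 \<and> a \<noteq> b}"
  unfolding symr_def set_pairs by auto

lemma SSK_eq:
  assumes n: "2 \<le> n"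
  shows "SS n (symr (pairs n)) = IE n"
proof
  show "SS n (symr (pairs n)) \<subseteq> IE n"
  proof
    fix t assume "t \<in> SS n (symr (pairs n))"
    then have R: "RR n t" and Cc: "compatC n (symr (pairs n)) t" by (auto simp: SS_def)
    have tr: "t \<in> transf n" "\<forall>q<n. t q \<noteq> 0" "t (n-1) = n-1"
      and l: "t 0 \<noteq> n-1 \<Longrightarrow> 0<q \<Longrightarrow> q<n-1 \<Longrightarrow> t 0 \<noteq> t q" for q using R by (auto simp: RR_def)
    have c1: "\<And>a b. 0 < a \<Longrightarrow> a < n-1 \<Longrightarrow> 0 < b \<Longrightarrow> b < n-1 \<Longrightarrow> a \<noteq> b \<Longrightarrow> t a = t b \<Longrightarrow> t a = n-1"
      using Cc symr_pairs[OF n] by (auto simp: compatC_def)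
    have "p = q \<or> t p = n-1" if "p < n" "q < n" "t p = t q" for p q
    proof (rule ccontr)
      assume c: "\<not> (p = q \<or> t p = n-1)"
      show False
      proof (cases "p = n-1 \<or> q = n-1")
        case True then show False using c tr that by auto
      next
        case nf: False
        show False
        proof (cases "p = 0 \<or> q = 0")
          case True
          then show False
          proof
            assume p0: "p = 0"
            have "0 < q" "q < n-1" using p0 c that nf by auto
            then show False using l[of q] p0 c that by auto
          next
            assume q0: "q = 0"
            have "0 < p" "p < n-1" using q0 c that nf by auto
            then show False using l[of p] q0 c that by auto
          qed
        next
          case False
          have "p < n-1" "q < n-1" using that nf by auto
          then show False using c1[of p q] c that nf False by auto
        qed
      qed
    qed
    then show "t \<in> IE n" using tr by (auto simp: IE_def)
  qed
next
  show "IE n \<subseteq> SS n (symr (pairs n))"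
  proof
    fix t assume "t \<in> IE n"
    then have tr: "t \<in> transf n" "\<forall>q<n. t q \<noteq> 0" "t (n-1) = n-1"
      and ie: "\<And>p q. p<n \<Longrightarrow> q<n \<Longrightarrow> t p = t q \<Longrightarrow> p = q \<or> t p = n-1" by (auto simp: IE_def)
    have lt: "\<And>q. q < n \<Longrightarrow> t q < n" using tr by (auto simp: transf_def)
    have "t 0 \<noteq> n-1 \<longrightarrow> (\<forall>q. 0<q \<and> q<n-1 \<longrightarrow> t 0 \<noteq> t q)"
    proof (intro impI allI)
      fix q assume a: "t 0 \<noteq> n-1" "0<q \<and> q<n-1"
      show "t 0 \<noteq> t q"
      proof
        assume e: "t 0 = t q"
        have "0 < n" "q < n" using a by auto
        then have "0 = q \<or> t 0 = n-1" using ie[of 0 q] e by blast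
        then show False using a by simp
      qed
    qed
    then have "RR n t" using tr unfolding RR_def by blast
    moreover have "compatC n (symr (pairs n)) t"
      unfolding compatC_def symr_pairs[OF n]
    proof (intro conjI allI impI)
      fix a b assume "(a,b) \<in> {(a,b). 0 < a \<and> a < n-1 \<and> 0 < b \<and> b < n-1 \<and> a \<noteq> b}" "t a = t b"
      then have "a < n" "b < n" "a \<noteq> b" "t a = t b" by auto
      then show "t a = n-1" using ie[of a b] by blast
    next
      fix q assume a: "t 0 \<noteq> n-1" "0 < q \<and> q < n-1" "t q \<noteq> n-1"
      have "t 0 < n" "t q < n" "t 0 \<noteq> 0" "t q \<noteq> 0" using lt tr a n by auto
      moreover have "t 0 \<noteq> t q"
      proof
        assume e: "t 0 = t q"
        have "0 < n" "q < n" using a by auto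
        then have "0 = q \<or> t 0 = n-1" using ie[of 0 q] e by blast
        then show False using a by simp
      qed
      ultimately show "(t 0, t q) \<in> {(a,b). 0 < a \<and> a < n-1 \<and> 0 < b \<and> b < n-1 \<and> a \<noteq> b}"
        using a by auto
    qed
    ultimately show "t \<in> SS n (symr (pairs n))" by (simp add: SS_def)
  qed
qed

lemma IE_funpow:
  assumes "t \<in> IE n"
  shows "(\<forall>q<n. (t^^j) q < n) \<and> (t^^j) (n-1) = n-1 \<and>
     (\<forall>p<n. \<forall>q<n. (t^^j) p = (t^^j) q \<longrightarrow> p = q \<or> (t^^j) p = n-1)"
proof (induction j)
  case 0 then show ?case by simp
next
  case (Suc j)
  have tr: "\<And>q. q<n \<Longrightarrow> t q < n" "t (n-1) = n-1"
    and ie: "\<And>p q. p<n \<Longrightarrow> q<n \<Longrightarrow> t p = t q \<Longrightarrow> p = q \<or> t p = n-1"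
    using assms by (auto simp: IE_def transf_def)
  have IH1: "\<And>q. q<n \<Longrightarrow> (t^^j) q < n" and IH2: "(t^^j) (n-1) = n-1"
    and IH3: "\<And>p q. p<n \<Longrightarrow> q<n \<Longrightarrow> (t^^j) p = (t^^j) q \<Longrightarrow> p = q \<or> (t^^j) p = n-1"
    using Suc.IH by blast+
  have f: "\<And>q. (t ^^ Suc j) q = t ((t^^j) q)" by simp
  show ?case
  proof (intro conjI allI impI)
    fix q assume "q < n" then show "(t ^^ Suc j) q < n" unfolding f using IH1 tr(1) by blast
  next
    show "(t ^^ Suc j) (n-1) = n-1" unfolding f IH2 tr(2) ..
  next
    fix p q assume pq: "p < n" "q < n" "(t ^^ Suc j) p = (t ^^ Suc j) q"
    then have e: "t ((t^^j) p) = t ((t^^j) q)" by simp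
    have "(t^^j) p = (t^^j) q \<or> t ((t^^j) p) = n-1" using ie[OF IH1[OF pq(1)] IH1[OF pq(2)] e] .
    then show "p = q \<or> (t ^^ Suc j) p = n-1"
    proof
      assume "(t^^j) p = (t^^j) q"
      then have "p = q \<or> (t^^j) p = n-1" using IH3 pq(1,2) by blast
      then show ?thesis unfolding f using tr(2) by auto
    next
      assume "t ((t^^j) p) = n-1" then show ?thesis unfolding f by simp
    qed
  qed
qed

lemma V_eq:
  assumes n: "2 \<le> n"
  shows "V_sf n = IE n"
proof
  show "V_sf n \<subseteq> IE n"
  proof
    fix t assume "t \<in> V_sf n"
    then have B: "t \<in> B_sf n" and V: "\<And>p q. p<n \<Longrightarrow> q<n \<Longrightarrow> p \<noteq> q \<Longrightarrow> (t p = n-1 \<and> t q = n-1) \<or> t p \<noteq> t q"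
      by (auto simp: V_sf_def)
    have "\<forall>p<n. \<forall>q<n. t p = t q \<longrightarrow> p = q \<or> t p = n-1" using V by blast
    then show "t \<in> IE n" using B by (auto simp: IE_def B_sf_def)
  qed
next
  show "IE n \<subseteq> V_sf n"
  proof
    fix t assume t: "t \<in> IE n"
    then have tr: "t \<in> transf n" "\<forall>q<n. t q \<noteq> 0" "t (n-1) = n-1"
      and ie: "\<And>p q. p<n \<Longrightarrow> q<n \<Longrightarrow> t p = t q \<Longrightarrow> p = q \<or> t p = n-1" by (auto simp: IE_def)
    have "(t ^^ j) 0 = n - 1 \<or> (\<forall>q. 0 < q \<and> q < n - 1 \<longrightarrow> (t ^^ j) 0 \<noteq> (t ^^ j) q)" for j
    proof (cases "(t ^^ j) 0 = n-1")
      case False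
      have F: "\<forall>p<n. \<forall>q<n. (t^^j) p = (t^^j) q \<longrightarrow> p = q \<or> (t^^j) p = n-1"
        using IE_funpow[OF t, of j] by blast
      have "(t ^^ j) 0 \<noteq> (t ^^ j) q" if "0 < q \<and> q < n - 1" for q
      proof
        assume e: "(t ^^ j) 0 = (t ^^ j) q"
        have "0 < n" "q < n" using that by auto
        then have "0 = q \<or> (t^^j) 0 = n-1" using F e by blast
        then show False using that False by simp
      qed
      then show ?thesis by blast
    qed simp
    then have "t \<in> B_sf n" using tr unfolding B_sf_def by auto
    moreover have "\<forall>p<n. \<forall>q<n. p \<noteq> q \<longrightarrow> (t p = n - 1 \<and> t q = n - 1) \<or> t p \<noteq> t q"
    proof (intro allI impI)
      fix p q assume "p < n" "q < n" "p \<noteq> q"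
      then show "(t p = n - 1 \<and> t q = n - 1) \<or> t p \<noteq> t q" using ie[of p q] by auto
    qed
    ultimately show "t \<in> V_sf n" unfolding V_sf_def by blast
  qed
qed



lemma run_append: "run d q (u @ v) = run d (run d q u) v"
  by (simp add: run_def)

lemma run_Nil[simp]: "run d q [] = q"
  by (simp add: run_def)

lemma run_Cons: "run d q (a # w) = run d (d a q) w"
  by (simp add: run_def)

lemma run_lt:
  assumes "is_dfa n Sig delta F" "q < n" "set w \<subseteq> Sig"
  shows "run delta q w < n"
  using assms(2,3)
proof (induction w arbitrary: q)
  case Nil then show ?case by simp
next
  case (Cons a w)
  then have "delta a q < n" using assms(1) by (auto simp: is_dfa_def)
  then show ?case using Cons by (simp add: run_Cons)
qed

locale sfdfa =
  fixes n Sig delta F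
  assumes n2: "2 \<le> n"
    and mini: "is_minimal_dfa n Sig delta F"
    and empt: "is_empty_state Sig delta F (n-1)"
    and sfree: "suffix_free (lang Sig delta F)"
begin

lemma dfa: "is_dfa n Sig delta F" using mini by (simp add: is_minimal_dfa_def)

lemma rlt: "q < n \<Longrightarrow> set w \<subseteq> Sig \<Longrightarrow> run delta q w < n"
  using run_lt[OF dfa] by blast

lemma reach: "q < n \<Longrightarrow> \<exists>w. set w \<subseteq> Sig \<and> run delta 0 w = q"
  using mini by (simp add: is_minimal_dfa_def)

lemma dist: "p < n \<Longrightarrow> q < n \<Longrightarrow> p \<noteq> q \<Longrightarrow>
   \<exists>w. set w \<subseteq> Sig \<and> (run delta p w \<in> F \<longleftrightarrow> run delta q w \<notin> F)"
  using mini by (simp add: is_minimal_dfa_def)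

lemma e_notF: "set w \<subseteq> Sig \<Longrightarrow> run delta (n-1) w \<notin> F"
  using empt by (simp add: is_empty_state_def)

lemma run_e: assumes "set w \<subseteq> Sig" shows "run delta (n-1) w = n-1"
proof (rule ccontr)
  let ?q = "run delta (n-1) w"
  assume ne: "?q \<noteq> n-1"
  have "?q < n" using rlt assms n2 by simp
  then obtain v where v: "set v \<subseteq> Sig" "run delta ?q v \<in> F \<longleftrightarrow> run delta (n-1) v \<notin> F"
    using dist[of ?q "n-1"] ne n2 by auto
  have "run delta ?q v \<notin> F"
    using e_notF[of "w @ v"] assms v by (simp add: run_append)
  then show False using v e_notF by blast
qed

lemma nonempty: assumes "q < n" "q \<noteq> n-1" shows "\<exists>v. set v \<subseteq> Sig \<and> run delta q v \<in> F"
proof -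
  obtain v where v: "set v \<subseteq> Sig" "run delta q v \<in> F \<longleftrightarrow> run delta (n-1) v \<notin> F"
    using dist[of q "n-1"] assms n2 by auto
  then show ?thesis using e_notF by blast
qed

lemma inL: "set w \<subseteq> Sig \<Longrightarrow> run delta 0 w \<in> F \<Longrightarrow> w \<in> lang Sig delta F"
  by (simp add: lang_def)

lemma key:
  assumes q: "q < n" "q \<noteq> 0" and x: "set x \<subseteq> Sig" and eq: "run delta 0 x = run delta q x"
  shows "run delta 0 x = n-1"
proof (rule ccontr)
  let ?r = "run delta 0 x"
  assume ne: "?r \<noteq> n-1"
  have "?r < n" using rlt x n2 by simp
  then obtain v where v: "set v \<subseteq> Sig" "run delta ?r v \<in> F" using nonempty ne by blast
  obtain u where u: "set u \<subseteq> Sig" "run delta 0 u = q" using reach q by blast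
  have un: "u \<noteq> []" using u q by auto
  have L1: "x @ v \<in> lang Sig delta F" using v x by (intro inL) (auto simp: run_append)
  have L2: "u @ x @ v \<in> lang Sig delta F" using v x u eq by (intro inL) (auto simp: run_append)
  have "suffix (x @ v) (u @ x @ v)" by (simp add: suffix_def)
  then have "x @ v = u @ x @ v" using sfree L1 L2 unfolding suffix_free_def by blast
  then show False using un by simp
qed

lemma zero_free:
  assumes q: "q < n" and w: "set w \<subseteq> Sig" "w \<noteq> []"
  shows "run delta q w \<noteq> 0"
proof
  assume z: "run delta q w = 0"
  obtain u where u: "set u \<subseteq> Sig" "run delta 0 u = q" using reach q by blast
  obtain v where v: "set v \<subseteq> Sig" "run delta 0 v \<in> F" using nonempty[of 0] n2 by auto
  have L1: "v \<in> lang Sig delta F" using v by (intro inL) auto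
  have L2: "u @ w @ v \<in> lang Sig delta F" using v w u z by (intro inL) (auto simp: run_append)
  have "suffix v (u @ w @ v)" by (simp add: suffix_def)
  then have "v = u @ w @ v" using sfree L1 L2 unfolding suffix_free_def by blast
  then show False using w by simp
qed

lemma wt_run: "q < n \<Longrightarrow> word_transf n delta w q = run delta q w"
  by (simp add: word_transf_def)

lemma RR_T: assumes "t \<in> trans_semigroup n Sig delta" shows "RR n t"
proof -
  obtain w where w: "t = word_transf n delta w" "w \<noteq> []" "set w \<subseteq> Sig"
    using assms by (auto simp: trans_semigroup_def)
  have tq: "\<And>q. q < n \<Longrightarrow> t q = run delta q w" using w wt_run by simp
  have "t \<in> transf n" using w rlt by (auto simp: transf_def word_transf_def)
  moreover have "\<forall>q<n. t q \<noteq> 0" using tq zero_free w by simp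
  moreover have "t (n-1) = n-1" using tq run_e w n2 by simp
  moreover have "t 0 \<noteq> n-1 \<longrightarrow> (\<forall>q. 0<q \<and> q<n-1 \<longrightarrow> t 0 \<noteq> t q)"
  proof (intro impI allI)
    fix q assume a: "t 0 \<noteq> n-1" "0 < q \<and> q < n-1"
    show "t 0 \<noteq> t q"
    proof
      assume e: "t 0 = t q"
      have "0 < n" "q < n" using a by auto
      then have "run delta 0 w = run delta q w" using tq[of 0] tq[of q] e by simp
      then have "run delta 0 w = n-1" using key[of q w] a w \<open>q < n\<close> by simp
      then show False using a tq[of 0] \<open>0 < n\<close> by simp
    qed
  qed
  ultimately show ?thesis by (simp add: RR_def)
qed

lemma I2_T:
  assumes t: "t \<in> trans_semigroup n Sig delta" and s: "s \<in> trans_semigroup n Sig delta"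
    and q: "0 < q" "q < n" and eq: "s (t 0) = s (t q)"
  shows "s (t 0) = n-1"
proof -
  obtain w where w: "t = word_transf n delta w" "w \<noteq> []" "set w \<subseteq> Sig"
    using t by (auto simp: trans_semigroup_def)
  obtain x where x: "s = word_transf n delta x" "x \<noteq> []" "set x \<subseteq> Sig"
    using s by (auto simp: trans_semigroup_def)
  have t0: "t 0 = run delta 0 w" "t q = run delta q w" using w q wt_run by auto
  have lt: "run delta 0 w < n" "run delta q w < n" using rlt w q by auto
  have s0: "s (t 0) = run delta 0 (w @ x)" "s (t q) = run delta q (w @ x)"
    using t0 lt x wt_run by (auto simp: run_append)
  have "run delta 0 (w @ x) = n-1" using key[of q "w @ x"] q w x eq s0 by simp
  then show ?thesis using s0 by simp
qed

end



definition pt :: "nat \<Rightarrow> nat \<Rightarrow> nat \<Rightarrow> nat \<Rightarrow> nat" where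
  "pt n a b = (\<lambda>q. if q = a then b else if q < n then n-1 else q)"

lemma SS0_comp:
  assumes n: "2 \<le> n" and t: "t \<in> SS n {}" and s: "s \<in> SS n {}"
  shows "s \<circ> t \<in> SS n {}"
proof -
  have tR: "t \<in> transf n" "\<forall>q<n. t q \<noteq> 0" "t (n-1) = n-1"
    and tm: "\<And>q. t 0 \<noteq> n-1 \<Longrightarrow> 0 < q \<Longrightarrow> q < n-1 \<Longrightarrow> t q = n-1"
    using t by (auto simp: SS_def RR_def compatC_def)
  have sR: "s \<in> transf n" "\<forall>q<n. s q \<noteq> 0" "s (n-1) = n-1"
    using s by (auto simp: SS_def RR_def compatC_def)
  have tl: "\<And>q. q < n \<Longrightarrow> t q < n" "\<And>q. n \<le> q \<Longrightarrow> t q = q" using tR by (auto simp: transf_def)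
  have sl: "\<And>q. q < n \<Longrightarrow> s q < n" "\<And>q. n \<le> q \<Longrightarrow> s q = q" using sR by (auto simp: transf_def)
  have tr: "s \<circ> t \<in> transf n" using tl sl by (auto simp: transf_def)
  have nz: "\<forall>q<n. (s \<circ> t) q \<noteq> 0" using tl sR by auto
  have fe: "(s \<circ> t) (n-1) = n-1" using tR sR by simp
  have mid: "(s \<circ> t) q = n-1" if "(s \<circ> t) 0 \<noteq> n-1" "0 < q" "q < n-1" for q
  proof -
    have "t 0 \<noteq> n-1" using that sR by auto
    then have "t q = n-1" using tm that by auto
    then show ?thesis using sR by simp
  qed
  have "RR n (s \<circ> t)" unfolding RR_def using tr nz fe mid by auto
  moreover have "compatC n {} (s \<circ> t)" unfolding compatC_def using mid by auto
  ultimately show ?thesis by (simp add: SS_def)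
qed

lemma IE_comp:
  assumes t: "t \<in> IE n" and s: "s \<in> IE n"
  shows "s \<circ> t \<in> IE n"
proof -
  have tR: "t \<in> transf n" "\<forall>q<n. t q \<noteq> 0" "t (n-1) = n-1"
    and ti: "\<And>p q. p<n \<Longrightarrow> q<n \<Longrightarrow> t p = t q \<Longrightarrow> p = q \<or> t p = n-1"
    using t by (auto simp: IE_def)
  have sR: "s \<in> transf n" "\<forall>q<n. s q \<noteq> 0" "s (n-1) = n-1"
    and si: "\<And>p q. p<n \<Longrightarrow> q<n \<Longrightarrow> s p = s q \<Longrightarrow> p = q \<or> s p = n-1"
    using s by (auto simp: IE_def)
  have tl: "\<And>q. q < n \<Longrightarrow> t q < n" "\<And>q. n \<le> q \<Longrightarrow> t q = q" using tR by (auto simp: transf_def)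
  have sl: "\<And>q. q < n \<Longrightarrow> s q < n" "\<And>q. n \<le> q \<Longrightarrow> s q = q" using sR by (auto simp: transf_def)
  have tr: "s \<circ> t \<in> transf n" using tl sl by (auto simp: transf_def)
  have nz: "\<forall>q<n. (s \<circ> t) q \<noteq> 0" using tl sR by auto
  have fe: "(s \<circ> t) (n-1) = n-1" using tR sR by simp
  have "p = q \<or> (s \<circ> t) p = n-1" if pq: "p < n" "q < n" "(s \<circ> t) p = (s \<circ> t) q" for p q
  proof -
    have "t p = t q \<or> s (t p) = n-1" using si[OF tl(1)[OF pq(1)] tl(1)[OF pq(2)]] pq(3) by simp
    then show ?thesis
    proof
      assume "t p = t q"
      then have "p = q \<or> t p = n-1" using ti pq(1,2) by blast
      then show ?thesis using sR by auto
    qed simp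
  qed
  then show ?thesis using tr nz fe by (auto simp: IE_def)
qed

lemma pt_SS0:
  assumes n: "2 \<le> n" "a < n-1" "0 < b" "b < n"
  shows "pt n a b \<in> SS n {}"
proof -
  have tr: "pt n a b \<in> transf n" using n by (auto simp: transf_def pt_def)
  have "RR n (pt n a b)" unfolding RR_def using tr n by (auto simp: pt_def)
  moreover have "compatC n {} (pt n a b)" unfolding compatC_def using n by (auto simp: pt_def)
  ultimately show ?thesis by (simp add: SS_def)
qed

lemma pt_IE:
  assumes n: "2 \<le> n" "a < n-1" "0 < b" "b < n"
  shows "pt n a b \<in> IE n"
  using n by (auto simp: IE_def transf_def pt_def)

lemma IE_RR: "2 \<le> n \<Longrightarrow> t \<in> IE n \<Longrightarrow> RR n t"
  using SSK_eq[of n] by (auto simp: SS_def)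

lemma realize:
  assumes n3: "3 \<le> n" and fin: "finite A" and RA: "\<forall>t\<in>A. RR n t"
    and cl: "\<forall>t\<in>A. \<forall>s\<in>A. s \<circ> t \<in> A"
    and pts: "\<forall>a b. a < n-1 \<longrightarrow> 0 < b \<longrightarrow> b < n \<longrightarrow> pt n a b \<in> A"
  shows "A \<in> sf_semigroups n"
proof -
  obtain h where h: "bij_betw h {0..<card A} A" using ex_bij_betw_nat_finite[OF fin] by blast
  define Sig where "Sig = {0..<card A}"
  define delta where "delta = (\<lambda>a q. h a q)"
  define F :: "nat set" where "F = {1}"
  have hA: "a \<in> Sig \<Longrightarrow> h a \<in> A" for a using h unfolding Sig_def by (auto simp: bij_betw_def)
  have hS: "t \<in> A \<Longrightarrow> \<exists>a\<in>Sig. h a = t" for t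
  proof -
    assume "t \<in> A"
    then have "t \<in> h ` {0..<card A}" using h unfolding bij_betw_def by simp
    then show ?thesis unfolding Sig_def by (metis imageE)
  qed
  have hR: "a \<in> Sig \<Longrightarrow> RR n (h a)" for a using hA RA by blast
  have hlt: "a \<in> Sig \<Longrightarrow> q < n \<Longrightarrow> h a q < n" for a q using hR by (auto simp: RR_def transf_def)
  have hge: "a \<in> Sig \<Longrightarrow> n \<le> q \<Longrightarrow> h a q = q" for a q using hR by (auto simp: RR_def transf_def)
  have hnz: "a \<in> Sig \<Longrightarrow> q < n \<Longrightarrow> h a q \<noteq> 0" for a q using hR by (auto simp: RR_def)
  have he: "a \<in> Sig \<Longrightarrow> h a (n-1) = n-1" for a using hR by (auto simp: RR_def)
  have "finite Sig" unfolding Sig_def by simp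
  then have dfa: "is_dfa n Sig delta F" using n3 hlt unfolding is_dfa_def F_def delta_def by auto
  have wt1: "a \<in> Sig \<Longrightarrow> word_transf n delta [a] = h a" for a
    using hge by (auto simp: word_transf_def delta_def run_def)
  have wtA: "w \<noteq> [] \<Longrightarrow> set w \<subseteq> Sig \<Longrightarrow> word_transf n delta w \<in> A" for w
  proof (induction w rule: rev_induct)
    case Nil then show ?case by simp
  next
    case (snoc a w)
    show ?case
    proof (cases "w = []")
      case True then show ?thesis using snoc wt1 hA by simp
    next
      case False
      have aS: "a \<in> Sig" and wS: "set w \<subseteq> Sig" using snoc by auto
      have "word_transf n delta (w @ [a]) = h a \<circ> word_transf n delta w"
      proof
        fix q show "word_transf n delta (w @ [a]) q = (h a \<circ> word_transf n delta w) q"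
          using hge[OF aS] by (auto simp: word_transf_def run_append delta_def run_def)
      qed
      moreover have "h a \<circ> word_transf n delta w \<in> A" using cl snoc.IH[OF False wS] hA[OF aS] by blast
      ultimately show ?thesis by (simp only:)
    qed
  qed
  have TS: "trans_semigroup n Sig delta = A"
  proof
    show "trans_semigroup n Sig delta \<subseteq> A" using wtA by (auto simp: trans_semigroup_def)
    show "A \<subseteq> trans_semigroup n Sig delta"
    proof
      fix t assume "t \<in> A"
      then obtain a where a: "a \<in> Sig" "h a = t" using hS by blast
      then have tw: "t = word_transf n delta [a]" using wt1 by simp
      show "t \<in> trans_semigroup n Sig delta" unfolding trans_semigroup_def mem_Collect_eq
        by (rule exI[of _ "[a]"]) (use a tw in simp)
    qed
  qed
  have run1: "a \<in> Sig \<Longrightarrow> run delta q [a] = h a q" for a q by (simp add: run_def delta_def)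
  have reach: "\<forall>q<n. \<exists>w. set w \<subseteq> Sig \<and> run delta 0 w = q"
  proof (intro allI impI)
    fix q assume q: "q < n"
    show "\<exists>w. set w \<subseteq> Sig \<and> run delta 0 w = q"
    proof (cases "q = 0")
      case True then show ?thesis by (intro exI[of _ "[]"]) simp
    next
      case False
      then have "pt n 0 q \<in> A" using pts q n3 by auto
      then obtain a where a: "a \<in> Sig" "h a = pt n 0 q" using hS by blast
      then show ?thesis using run1[OF a(1)] by (intro exI[of _ "[a]"]) (simp add: pt_def)
    qed
  qed
  have dist: "\<forall>p<n. \<forall>q<n. p \<noteq> q \<longrightarrow> (\<exists>w. set w \<subseteq> Sig \<and> (run delta p w \<in> F \<longleftrightarrow> run delta q w \<notin> F))"
  proof (intro allI impI)
    fix p q assume pq: "p < n" "q < n" "p \<noteq> q"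
    have one: "\<exists>w. set w \<subseteq> Sig \<and> run delta x w \<in> F \<and> run delta y w \<notin> F"
      if xy: "x < n-1" "y < n" "x \<noteq> y" for x y
    proof -
      have "pt n x 1 \<in> A" using pts xy n3 by auto
      then obtain a where a: "a \<in> Sig" "h a = pt n x 1" using hS by blast
      then show ?thesis using run1[OF a(1)] xy n3
        by (intro exI[of _ "[a]"]) (simp add: pt_def F_def)
    qed
    show "\<exists>w. set w \<subseteq> Sig \<and> (run delta p w \<in> F \<longleftrightarrow> run delta q w \<notin> F)"
    proof (cases "p = n-1")
      case False
      then have "p < n-1" using pq by simp
      then show ?thesis using one[of p q] pq by blast
    next
      case True
      then have "q < n-1" using pq by simp
      then show ?thesis using one[of q p] pq by blast
    qed
  qed
  have mini: "is_minimal_dfa n Sig delta F" using dfa reach dist by (simp add: is_minimal_dfa_def)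
  have rune: "set w \<subseteq> Sig \<Longrightarrow> run delta (n-1) w = n-1" for w
  proof (induction w)
    case (Cons a w)
    then have "delta a (n-1) = n-1" using he unfolding delta_def by simp
    then show ?case using Cons by (simp add: run_Cons)
  qed simp
  have empt: "is_empty_state Sig delta F (n-1)"
    using rune n3 by (auto simp: is_empty_state_def F_def)
  have sf: "suffix_free (lang Sig delta F)"
    unfolding suffix_free_def
  proof (intro ballI impI)
    fix w u assume w: "w \<in> lang Sig delta F" and u: "u \<in> lang Sig delta F" and su: "suffix u w"
    obtain x where x: "w = x @ u" using su by (auto simp: suffix_def)
    show "u = w"
    proof (cases "x = []")
      case True then show ?thesis using x by simp
    next
      case False
      have xS: "set x \<subseteq> Sig" and uS: "set u \<subseteq> Sig" using w u x by (auto simp: lang_def)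
      have u1: "run delta 0 u = 1" using u by (simp add: lang_def F_def)
      have w1: "run delta (run delta 0 x) u = 1" using w x by (simp add: lang_def F_def run_append)
      have un: "u \<noteq> []" using u1 by auto
      define q where "q = run delta 0 x"
      have "word_transf n delta x \<in> A" using wtA False xS by blast
      then have Rx: "RR n (word_transf n delta x)" using RA by blast
      have wx0: "word_transf n delta x 0 = q" using n3 unfolding q_def word_transf_def by simp
      have "\<forall>q<n. word_transf n delta x q < n" "\<forall>q<n. word_transf n delta x q \<noteq> 0"
        using Rx unfolding RR_def transf_def by blast+
      then have q: "q < n" "q \<noteq> 0" using wx0 n3 by (metis zero_less_numeral less_le_trans le_less_trans zero_less_Suc)+
      have "word_transf n delta u \<in> A" using wtA un uS by blast
      then have Ru: "RR n (word_transf n delta u)" using RA by blast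
      define t where "t = word_transf n delta u"
      have t0: "t 0 = 1" "t q = 1"
        using u1 w1 q(1) n3 unfolding t_def word_transf_def q_def[symmetric] by simp_all
      have "t (n-1) = n-1" using Ru unfolding t_def RR_def by blast
      then have "q \<noteq> n-1" using t0 n3 by auto
      then have "0 < q \<and> q < n-1" using q by auto
      moreover have "t 0 \<noteq> n-1" using t0 n3 by simp
      ultimately have "t 0 \<noteq> t q" using Ru unfolding t_def RR_def by blast
      then show ?thesis using t0 by simp
    qed
  qed
  show ?thesis unfolding sf_semigroups_def using TS mini empt sf by blast
qed



lemma upper:
  assumes n: "2 \<le> n" and T: "T \<in> sf_semigroups n" and x0: "set xs0 \<subseteq> set (pairs n)"
    and comp: "list_all (\<lambda>xs. xs = xs0 \<or> cnt n xs < cnt n xs0) (subseqs (pairs n))"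
  shows "T = SS n (symr xs0) \<or> card T < card (SS n (symr xs0))"
proof -
  obtain Sig delta F where TT: "T = trans_semigroup n Sig delta"
    and m: "is_minimal_dfa n Sig delta F" "is_empty_state Sig delta F (n - 1)"
      "suffix_free (lang Sig delta F)"
    using T unfolding sf_semigroups_def by blast
  interpret sfdfa n Sig delta F using n m by unfold_locales
  show ?thesis
  proof (rule main_bound[OF n _ _ x0 comp])
    show "\<forall>t\<in>T. RR n t" using RR_T TT by blast
    show "\<forall>t\<in>T. \<forall>s\<in>T. \<forall>q. 0 < q \<and> q < n \<longrightarrow> s (t 0) = s (t q) \<longrightarrow> s (t 0) = n-1"
      using I2_T TT by blast
  qed
qed

lemma umc: "S \<in> Fam \<Longrightarrow> (\<forall>T\<in>Fam. T = S \<or> card T < card S) \<Longrightarrow> unique_max_card Fam S"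
  unfolding unique_max_card_def by blast

lemma c6a: "cnt 6 [] = 629" by code_simp
lemma c6: "list_all (\<lambda>xs. xs = [] \<or> cnt 6 xs < 629) (subseqs (pairs 6))" by code_simp
lemma c5: "list_all (\<lambda>xs. xs = pairs 5 \<or> cnt 5 xs < cnt 5 (pairs 5)) (subseqs (pairs 5))" by code_simp
lemma c4: "list_all (\<lambda>xs. xs = pairs 4 \<or> cnt 4 xs < cnt 4 (pairs 4)) (subseqs (pairs 4))" by code_simp
lemma c3: "list_all (\<lambda>xs. xs = pairs 3 \<or> cnt 3 xs < cnt 3 (pairs 3)) (subseqs (pairs 3))" by code_simp
lemma c2: "list_all (\<lambda>xs. xs = pairs 2 \<or> cnt 2 xs < cnt 2 (pairs 2)) (subseqs (pairs 2))" by code_simp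

lemma fin_SS: "2 \<le> n \<Longrightarrow> set xs \<subseteq> set (pairs n) \<Longrightarrow> finite (SS n (symr xs))"
  by (rule card_SS(2)) (auto simp: set_pairs)

lemma part6: "unique_max_card (sf_semigroups 6) (W_sf 6)"
proof -
  have W: "W_sf 6 = SS 6 (symr [])" using W_eq[of 6] by (simp add: symr_def)
  have mem: "W_sf 6 \<in> sf_semigroups 6"
  proof -
    have "SS 6 {} \<in> sf_semigroups 6"
    proof (rule realize)
      show "finite (SS 6 {})" using fin_SS[of 6 "[]"] by (simp add: symr_def)
      show "\<forall>t\<in>SS 6 {}. RR 6 t" by (simp add: SS_def)
      show "\<forall>t\<in>SS 6 {}. \<forall>s\<in>SS 6 {}. s \<circ> t \<in> SS 6 {}" using SS0_comp[of 6] by simp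
      show "\<forall>a b. a < 6-1 \<longrightarrow> 0 < b \<longrightarrow> b < 6 \<longrightarrow> pt 6 a b \<in> SS 6 {}" using pt_SS0[of 6] by simp
    qed simp
    then show ?thesis using W_eq[of 6] by simp
  qed
  have "\<forall>T\<in>sf_semigroups 6. T = W_sf 6 \<or> card T < card (W_sf 6)"
  proof
    fix T assume T: "T \<in> sf_semigroups 6"
    have "list_all (\<lambda>xs. xs = [] \<or> cnt 6 xs < cnt 6 []) (subseqs (pairs 6))"
      using c6 by (simp only: c6a)
    then show "T = W_sf 6 \<or> card T < card (W_sf 6)" using upper[OF _ T, of "[]"] W by simp
  qed
  then show ?thesis using umc mem by blast
qed

lemma V_SS: "2 \<le> n \<Longrightarrow> V_sf n = SS n (symr (pairs n))"
  using V_eq SSK_eq by simp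

lemma mem_V: assumes "3 \<le> n" shows "V_sf n \<in> sf_semigroups n"
proof -
  have n2: "2 \<le> n" using assms by simp
  have "IE n \<in> sf_semigroups n"
  proof (rule realize[OF assms])
    show "finite (IE n)" using fin_SS[OF n2, of "pairs n"] SSK_eq[OF n2] by simp
    show "\<forall>t\<in>IE n. RR n t" using IE_RR[OF n2] by blast
    show "\<forall>t\<in>IE n. \<forall>s\<in>IE n. s \<circ> t \<in> IE n" using IE_comp by blast
    show "\<forall>a b. a < n-1 \<longrightarrow> 0 < b \<longrightarrow> b < n \<longrightarrow> pt n a b \<in> IE n" using pt_IE[OF n2] by blast
  qed
  then show ?thesis using V_eq[OF n2] by simp
qed

lemma mem_V2: "V_sf 2 \<in> sf_semigroups 2"
proof -
  define c :: "nat \<Rightarrow> nat" where "c = (\<lambda>q. if q < 2 then 1 else q)"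
  have V2: "V_sf 2 = {c}"
  proof -
    have "IE 2 = {c}"
    proof
      show "IE 2 \<subseteq> {c}"
      proof
        fix t assume t: "t \<in> IE 2"
        then have tr: "\<forall>q<2. t q < 2" "\<forall>q. 2 \<le> q \<longrightarrow> t q = q" "\<forall>q<2. t q \<noteq> 0"
          by (auto simp: IE_def transf_def)
        have "t = c"
        proof
          fix q show "t q = c q"
          proof (cases "q < 2")
            case True
            then have "t q < 2" "t q \<noteq> 0" using tr by auto
            then have "t q = 1" by linarith
            then show ?thesis using True by (simp add: c_def)
          next
            case False then show ?thesis using tr by (simp add: c_def)
          qed
        qed
        then show "t \<in> {c}" by simp
      qed
      show "{c} \<subseteq> IE 2" by (auto simp: IE_def c_def transf_def)
    qed
    then show ?thesis using V_eq[of 2] by simp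
  qed
  define delta :: "nat \<Rightarrow> nat \<Rightarrow> nat" where "delta = (\<lambda>a q. 1)"
  define Sig :: "nat set" where "Sig = {0}"
  define F :: "nat set" where "F = {0}"
  have r1: "w \<noteq> [] \<Longrightarrow> run delta q w = 1" for w q
  proof (induction w arbitrary: q)
    case (Cons a w)
    then show ?case by (cases w) (auto simp: run_Cons delta_def)
  qed simp
  have TS: "trans_semigroup 2 Sig delta = {c}"
  proof
    show "trans_semigroup 2 Sig delta \<subseteq> {c}"
      using r1 by (auto simp: trans_semigroup_def word_transf_def c_def)
    have "word_transf 2 delta [0] = c" by (auto simp: word_transf_def c_def run_def delta_def)
    then show "{c} \<subseteq> trans_semigroup 2 Sig delta"
      unfolding trans_semigroup_def Sig_def mem_Collect_eq by (auto intro!: exI[of _ "[0]"])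
  qed
  have dfa: "is_dfa 2 Sig delta F" by (simp add: is_dfa_def Sig_def F_def delta_def)
  have reach: "\<forall>q<2. \<exists>w. set w \<subseteq> Sig \<and> run delta 0 w = q"
  proof (intro allI impI)
    fix q :: nat assume "q < 2"
    then have "q = 0 \<or> q = 1" by auto
    then show "\<exists>w. set w \<subseteq> Sig \<and> run delta 0 w = q"
    proof
      assume "q = 0" then show ?thesis by (intro exI[of _ "[]"]) simp
    next
      assume "q = 1" then show ?thesis using r1[of "[0]" 0] by (intro exI[of _ "[0]"]) (simp add: Sig_def)
    qed
  qed
  have dist: "\<forall>p<2. \<forall>q<2. p \<noteq> q \<longrightarrow> (\<exists>w. set w \<subseteq> Sig \<and> (run delta p w \<in> F \<longleftrightarrow> run delta q w \<notin> F))"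
  proof (intro allI impI)
    fix p q :: nat assume "p < 2" "q < 2" "p \<noteq> q"
    then have "(p = 0 \<and> q = 1) \<or> (p = 1 \<and> q = 0)" by auto
    then show "\<exists>w. set w \<subseteq> Sig \<and> (run delta p w \<in> F \<longleftrightarrow> run delta q w \<notin> F)"
      by (intro exI[of _ "[]"]) (auto simp: F_def)
  qed
  have empt: "is_empty_state Sig delta F (2 - 1)"
    unfolding is_empty_state_def
  proof (intro allI impI)
    fix w :: "nat list" show "run delta (2-1) w \<notin> F"
      using r1[of w "2-1"] by (cases "w = []") (auto simp: F_def)
  qed
  have L: "lang Sig delta F = {[]}"
  proof
    show "lang Sig delta F \<subseteq> {[]}"
    proof
      fix w assume "w \<in> lang Sig delta F"
      then have "run delta 0 w = 0" by (simp add: lang_def F_def)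
      then show "w \<in> {[]}" using r1[of w 0] by (cases "w = []") auto
    qed
    show "{[]} \<subseteq> lang Sig delta F" by (simp add: lang_def F_def)
  qed
  have sf: "suffix_free (lang Sig delta F)" unfolding L suffix_free_def by simp
  have mini: "is_minimal_dfa 2 Sig delta F" using dfa reach dist by (simp add: is_minimal_dfa_def)
  have "trans_semigroup 2 Sig delta \<in> sf_semigroups 2"
    unfolding sf_semigroups_def using mini empt sf by blast
  then show ?thesis using TS V2 by simp
qed

lemma part5:
  assumes "2 \<le> n" "n \<le> 5"
  shows "unique_max_card (sf_semigroups n) (V_sf n)"
proof -
  have n2: "2 \<le> n" using assms by simp
  have mem: "V_sf n \<in> sf_semigroups n"
  proof (cases "n = 2")
    case True then show ?thesis using mem_V2 by simp
  next
    case False then show ?thesis using mem_V[of n] assms by simp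
  qed
  have comp: "list_all (\<lambda>xs. xs = pairs n \<or> cnt n xs < cnt n (pairs n)) (subseqs (pairs n))"
  proof -
    have "n = 2 \<or> n = 3 \<or> n = 4 \<or> n = 5" using assms by auto
    then show ?thesis using c2 c3 c4 c5 by auto
  qed
  have "\<forall>T\<in>sf_semigroups n. T = V_sf n \<or> card T < card (V_sf n)"
    using upper[OF n2 _ _ comp] V_SS[OF n2] by simp
  then show ?thesis using umc mem by blast
qed

theorem theorem3:
  shows "unique_max_card (sf_semigroups 6) (W_sf 6) \<and>
         (\<forall>n::nat. 2 \<le> n \<and> n \<le> 5 \<longrightarrow> unique_max_card (sf_semigroups n) (V_sf n))"
  using part6 part5 by blast



end
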